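(* Let $F\subsetneq K$ be fields of characteristic $0$, with $F$ a proper nonempty subfield of $K$. Let $q(x)=\sum_{j=0}^{m}b_j x^j\in F[x]$ be non-constant with $b_m\neq 0$, and let $p(x)=\sum_{k=0}^{n}a_k x^k\in K[x]$ with $a_n\neq 0$. If $p\circ q\in F[x]$, then $p\in F[x]$.
   Context: $F[x]$ denotes the set of polynomials with all coefficients in $F$. *)

theory Defs
  imports "HOL-Computational_Algebra.Polynomial"
begin

definition is_subfield :: "'a::field set \<Rightarrow> bool" where
  "is_subfield F \<longleftrightarrow> 0 \<in> F \<and> 1 \<in> F \<and>
     (\<forall>x\<in>F. \<forall>y\<in>F. x + y \<in> F \<and> x * y \<in> F) \<and>
     (\<forall>x\<in>F. - x \<in> F) \<and>
     (\<forall>x\<in>F. x \<noteq> 0 \<longrightarrow> inverse x \<in> F)"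

definition poly_over :: "'a::zero set \<Rightarrow> 'a poly set" where
  "poly_over F = {p. \<forall>i. coeff p i \<in> F}"

end

theory Submission
  imports Defs
begin

lemma sf_sum:
  assumes "is_subfield F" "\<And>x. x \<in> A \<Longrightarrow> f x \<in> F"
  shows "sum f A \<in> F"
  using assms(2)
proof (induction A rule: infinite_finite_induct)
  case (infinite A) then show ?case using assms(1) by (simp add: is_subfield_def)
next
  case empty then show ?case using assms(1) by (simp add: is_subfield_def)
next
  case (insert x A) then show ?case using assms(1) by (simp add: is_subfield_def)
qed

lemma po_add: "is_subfield F \<Longrightarrow> p \<in> poly_over F \<Longrightarrow> q \<in> poly_over F \<Longrightarrow> p + q \<in> poly_over F"
  by (simp add: poly_over_def is_subfield_def)

lemma po_diff: "is_subfield F \<Longrightarrow> p \<in> poly_over F \<Longrightarrow> q \<in> poly_over F \<Longrightarrow> p - q \<in> poly_over F"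
proof -
  assume F: "is_subfield F" and "p \<in> poly_over F" "q \<in> poly_over F"
  hence "coeff p i \<in> F" "coeff q i \<in> F" for i by (auto simp: poly_over_def)
  hence "coeff p i + - coeff q i \<in> F" for i using F unfolding is_subfield_def by blast
  thus ?thesis by (simp add: poly_over_def)
qed

lemma po_mult: assumes "is_subfield F" "p \<in> poly_over F" "q \<in> poly_over F" shows "p * q \<in> poly_over F"
proof -
  have "(\<Sum>x\<le>n. coeff p x * coeff q (n - x)) \<in> F" for n
    by (rule sf_sum[OF assms(1)]) (use assms in \<open>simp add: poly_over_def is_subfield_def\<close>)
  thus ?thesis by (simp add: poly_over_def coeff_mult)
qed

lemma po_power: "is_subfield F \<Longrightarrow> q \<in> poly_over F \<Longrightarrow> q ^ n \<in> poly_over F"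
  apply (induction n)
   apply (simp add: poly_over_def is_subfield_def coeff_1)
  by (simp add: po_mult)

lemma po_smult: "is_subfield F \<Longrightarrow> c \<in> F \<Longrightarrow> q \<in> poly_over F \<Longrightarrow> smult c q \<in> poly_over F"
  by (simp add: poly_over_def is_subfield_def)

lemma po_monom: "is_subfield F \<Longrightarrow> c \<in> F \<Longrightarrow> monom c n \<in> poly_over F"
  by (simp add: poly_over_def is_subfield_def coeff_monom)

lemma pcomp_X_pow: "pcompose ([:0, 1:] ^ n) q = q ^ n"
  by (induction n) (simp_all add: pcompose_mult pcompose_pCons pcompose_1)

lemma sf_div: assumes "is_subfield F" "a * b \<in> F" "b \<in> F" "b \<noteq> 0" shows "(a::'a::field) \<in> F"
proof -
  have "a = (a * b) * inverse b" using assms(4) by simp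
  thus ?thesis using assms by (metis is_subfield_def)
qed

lemma main:
  fixes F :: "'a::field_char_0 set" and p q :: "'a poly"
  assumes F: "is_subfield F" and q: "q \<in> poly_over F" and dq: "degree q \<ge> 1"
  shows "pcompose p q \<in> poly_over F \<Longrightarrow> p \<in> poly_over F"
proof (induction "degree p" arbitrary: p rule: less_induct)
  case less
  define n where "n = degree p"
  define c where "c = lead_coeff p"
  have lq: "lead_coeff q \<in> F" "lead_coeff q \<noteq> 0" using q dq by (auto simp: poly_over_def)
  have "lead_coeff (pcompose p q) \<in> F" using less.prems by (simp add: poly_over_def)
  hence "c * lead_coeff q ^ n \<in> F" using lead_coeff_comp[of q p] dq by (simp add: c_def n_def)
  moreover have "lead_coeff q ^ n \<in> F"
    using lq(1) by (induction n) (simp_all add: F[unfolded is_subfield_def])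
  ultimately have cF: "c \<in> F" using sf_div[OF F] lq by simp
  show ?case
  proof (cases "n = 0")
    case True
    then obtain a where "p = [:a:]" by (metis degree_eq_zeroE n_def)
    then show ?thesis using less.prems by simp
  next
    case False
    define p' where "p' = p - monom c n"
    have dp': "degree p' < degree p"
    proof (intro degree_lessI allI impI)
      show "p' \<noteq> 0 \<or> degree p > 0" using False n_def by simp
      fix k assume "k \<ge> degree p"
      then show "coeff p' k = 0"
        by (cases "k = degree p") (auto simp: p'_def c_def n_def coeff_monom coeff_eq_0)
    qed
    have "pcompose p' q = pcompose p q - smult c (q ^ n)"
      by (simp add: p'_def pcompose_diff monom_altdef pcompose_smult pcomp_X_pow)
    hence "pcompose p' q \<in> poly_over F"
      using po_diff[OF F less.prems po_smult[OF F cF po_power[OF F q]]] by simp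
    hence "p' \<in> poly_over F" using less.hyps dp' by blast
    hence "p' + monom c n \<in> poly_over F" using po_add[OF F] po_monom[OF F cF] by blast
    thus ?thesis by (simp add: p'_def)
  qed
qed

theorem lemma12:
  fixes F :: "'a::field_char_0 set" and p q :: "'a poly"
  assumes "is_subfield F" and "F \<noteq> UNIV"
    and "q \<in> poly_over F" and "degree q \<ge> 1"
    and "p \<noteq> 0"
    and "pcompose p q \<in> poly_over F"
  shows "p \<in> poly_over F"
  using main[OF assms(1,3,4) assms(6)] .

end
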